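(* Let $r,m\ge1$, $W\in\mathbb{R}^{m\times r}$, $b\in\mathbb{R}^m$, $\sigma^2>0$, and $h(z)=a(Wz+b)$ where $a(x)=\log(1+e^x)$ is applied componentwise. Suppose $Z\sim N(0,I_r)$ and $X\mid\{Z=z\}\sim N(h(z),\sigma^2I_m)$. Fix $x\in\mathbb{R}^m$, let $p(z\mid x)$ be the conditional density of $Z$ given $X=x$, and set $V(z)=-\log p(z\mid x)$. Then $V$ is bounded below, $V$ satisfies conditions (b) and (c) of Assumption A1, and for every $\gamma>0$ there exist $\alpha>0$ and $\beta\in(0,1)$ such that Assumption A2 holds for $V$ (equivalently, $V-\inf V$ satisfies Assumptions A1 and A2).
   Context: A map $\phi:\mathbb{R}^a\to\mathbb{R}^b$ has polynomial growth if there are $C>0$ and an integer $m\ge0$ with $\Vert\phi(x)\Vert\le C(1+\Vert x\Vert^m)$ for all $x$; $\mathscr{C}^\infty_{poly}$ denotes the infinitely differentiable maps such that the map and all its derivatives have polynomial growth. Norms of matrices are operator norms. Assumption A1: (a) $V(x)\ge0$ for all $x\in\mathbb{R}^r$; (b) $\Vert\nabla^2V(x)\Vert\le\nu$ for some constant $\nu>0$ and all $x$; (c) $V\in\mathscr{C}^\infty_{poly}$. Assumption A2 (for a given $\gamma>0$): there exist constants $\alpha>0$ and $0<\beta<1$ such that for all $x\in\mathbb{R}^r$, $\frac12\langle\nabla V(x),x\rangle\ge\beta V(x)+\gamma^2C_\beta\Vert x\Vert^2-\alpha$, where $C_\beta=\frac{\beta(2-\beta)}{8(1-\beta)}$. 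*)

theory Defs
  imports "HOL-Probability.Probability"
begin

definition softplus :: "real \<Rightarrow> real" where
  "softplus t = ln (1 + exp t)"

definition gen :: "real^'r^'m \<Rightarrow> real^'m \<Rightarrow> real^'r \<Rightarrow> real^'m" where
  "gen W b z = (\<chi> i. softplus ((W *v z) $ i + b $ i))"

definition prior_density :: "real^'r \<Rightarrow> real" where
  "prior_density z = (\<Prod>i\<in>UNIV. std_normal_density (z $ i))"

text \<open>Density of X given Z = z, i.e. N(h(z), sigma^2 I_m); s2 is sigma^2.\<close>
definition lik_density :: "real^'r^'m \<Rightarrow> real^'m \<Rightarrow> real \<Rightarrow> real^'m \<Rightarrow> real^'r \<Rightarrow> real" where
  "lik_density W b s2 x z = (\<Prod>i\<in>UNIV. normal_density (gen W b z $ i) (sqrt s2) (x $ i))"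

definition post_density :: "real^'r^'m \<Rightarrow> real^'m \<Rightarrow> real \<Rightarrow> real^'m \<Rightarrow> real^'r \<Rightarrow> real" where
  "post_density W b s2 x z =
     prior_density z * lik_density W b s2 x z /
     (\<integral>z'. prior_density z' * lik_density W b s2 x z' \<partial>lborel)"

definition potential :: "real^'r^'m \<Rightarrow> real^'m \<Rightarrow> real \<Rightarrow> real^'m \<Rightarrow> real^'r \<Rightarrow> real" where
  "potential W b s2 x z = - ln (post_density W b s2 x z)"

text \<open>Iterated derivatives: dderiv f [v1,...,vk] x = D^k f(x)(v1,...,vk).\<close>
fun dderiv :: "('a::real_normed_vector \<Rightarrow> real) \<Rightarrow> 'a list \<Rightarrow> 'a \<Rightarrow> real" where
  "dderiv f [] = f"
| "dderiv f (v # vs) = (\<lambda>x. frechet_derivative (dderiv f vs) (at x) v)"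

text \<open>C^infinity_poly: infinitely differentiable, and f and all its derivatives
  (operator norms of the multilinear maps D^k f(x)) have polynomial growth.\<close>
definition smooth_poly :: "('a::real_normed_vector \<Rightarrow> real) \<Rightarrow> bool" where
  "smooth_poly f \<longleftrightarrow>
     (\<forall>vs x. dderiv f vs differentiable (at x)) \<and>
     (\<forall>k::nat. \<exists>C>0. \<exists>n::nat. \<forall>x vs. length vs = k \<longrightarrow> (\<forall>v\<in>set vs. norm v \<le> 1) \<longrightarrow>
         \<bar>dderiv f vs x\<bar> \<le> C * (1 + norm x ^ n))"

definition hessian_bounded :: "('a::real_normed_vector \<Rightarrow> real) \<Rightarrow> bool" where
  "hessian_bounded f \<longleftrightarrow>
     (\<exists>\<nu>>0. \<forall>x u v. norm u \<le> 1 \<longrightarrow> norm v \<le> 1 \<longrightarrow> \<bar>dderiv f [u, v] x\<bar> \<le> \<nu>)"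

definition C_beta :: "real \<Rightarrow> real" where
  "C_beta \<beta> = \<beta> * (2 - \<beta>) / (8 * (1 - \<beta>))"

text \<open>A2 for a given gamma; \<langle>\<nabla>V(x), x\<rangle> = DV(x)(x).\<close>
definition assumption_A2 :: "('a::real_normed_vector \<Rightarrow> real) \<Rightarrow> real \<Rightarrow> bool" where
  "assumption_A2 V \<gamma> \<longleftrightarrow>
     (\<exists>\<alpha>>0. \<exists>\<beta>. 0 < \<beta> \<and> \<beta> < 1 \<and>
        (\<forall>x. (1/2) * frechet_derivative V (at x) x \<ge>
               \<beta> * V x + \<gamma>\<^sup>2 * C_beta \<beta> * (norm x)\<^sup>2 - \<alpha>))"

end

theory Submission
  imports Defs "HOL-Computational_Algebra.Polynomial"
begin


definition sg :: "real \<Rightarrow> real" where "sg t = exp t / (1 + exp t)"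

lemma onepexp_pos[simp]: "0 < 1 + exp (t::real)" using exp_gt_zero[of t] by linarith
lemma onepexp_nz[simp]: "1 + exp (t::real) \<noteq> 0" using onepexp_pos[of t] by linarith

lemma sg_pos: "0 < sg t" and sg_less1: "sg t < 1"
  unfolding sg_def by (auto simp: add_pos_pos)

lemma softplus_deriv: "(softplus has_real_derivative sg t) (at t)"
  unfolding softplus_def[abs_def] sg_def
  by (rule derivative_eq_intros | simp add: add_pos_pos)+

lemma sg_deriv: "(sg has_real_derivative sg t * (1 - sg t)) (at t)"
  unfolding sg_def[abs_def]
  apply (rule derivative_eq_intros refl | simp)+
  apply (simp add: field_simps power2_eq_square)
  done

lemma softplus_nonneg: "0 \<le> softplus t"
  unfolding softplus_def by simp

lemma softplus_le: "softplus t \<le> \<bar>t\<bar> + 1"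
proof (cases "t \<le> 0")
  case True
  have "softplus t \<le> exp t" unfolding softplus_def
    by (rule ln_add_one_self_le_self) simp
  also have "\<dots> \<le> 1" using True by simp
  finally show ?thesis by simp
next
  case False
  have "softplus t \<le> ln (2 * exp t)" unfolding softplus_def
    using False by (subst ln_le_cancel_iff) auto
  also have "\<dots> = ln 2 + t" by (simp add: ln_mult)
  also have "ln (2::real) \<le> 1" using ln_le_minus_one[of 2] by simp
  finally show ?thesis using False by simp
qed

lemma softplus_le_exp: "softplus t \<le> exp t"
  unfolding softplus_def by (rule ln_add_one_self_le_self) simp

type_synonym trip = "real poly \<times> real poly \<times> real poly"

fun tstep :: "trip \<Rightarrow> trip" where
  "tstep (P, Q, R) = (pderiv P * [:0, 1, -1:] + [:0, 1:] * Q,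
                      pderiv Q * [:0, 1, -1:] + smult 2 ([:0, 1:] * R),
                      pderiv R * [:0, 1, -1:])"

fun teval :: "trip \<Rightarrow> real \<Rightarrow> real" where
  "teval (P, Q, R) t = poly P (sg t) + softplus t * poly Q (sg t) + (softplus t)\<^sup>2 * poly R (sg t)"

lemma poly_sg_deriv: "((\<lambda>t. poly P (sg t)) has_real_derivative poly (pderiv P) (sg t) * (sg t * (1 - sg t))) (at t)"
  by (rule DERIV_chain2[OF poly_DERIV sg_deriv])

lemma teval_deriv: "(teval T has_real_derivative teval (tstep T) t) (at t)"
proof -
  obtain P Q R where T: "T = (P, Q, R)" by (cases T) auto
  have d1: "((\<lambda>t. softplus t * poly Q (sg t)) has_real_derivative
       sg t * poly Q (sg t) + softplus t * (poly (pderiv Q) (sg t) * (sg t * (1 - sg t)))) (at t)"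
    using DERIV_mult'[OF softplus_deriv poly_sg_deriv[of Q]] by (simp add: algebra_simps)
  have dsq: "((\<lambda>t. (softplus t)\<^sup>2) has_real_derivative 2 * softplus t * sg t) (at t)"
    using DERIV_power[OF softplus_deriv, where n=2] by (simp add: algebra_simps)
  have d2: "((\<lambda>t. (softplus t)\<^sup>2 * poly R (sg t)) has_real_derivative
       (2 * softplus t * sg t) * poly R (sg t) + (softplus t)\<^sup>2 * (poly (pderiv R) (sg t) * (sg t * (1 - sg t)))) (at t)"
    using DERIV_mult'[OF dsq poly_sg_deriv[of R]] by (simp add: algebra_simps)
  have D: "((\<lambda>t. poly P (sg t) + softplus t * poly Q (sg t) + (softplus t)\<^sup>2 * poly R (sg t))
      has_real_derivative
      (poly (pderiv P) (sg t) * (sg t * (1 - sg t))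
       + (sg t * poly Q (sg t) + softplus t * (poly (pderiv Q) (sg t) * (sg t * (1 - sg t))))
       + ((2 * softplus t * sg t) * poly R (sg t) + (softplus t)\<^sup>2 * (poly (pderiv R) (sg t) * (sg t * (1 - sg t)))))) (at t)"
    by (intro DERIV_add poly_sg_deriv d1 d2)
  have E: "teval (tstep T) t = (poly (pderiv P) (sg t) * (sg t * (1 - sg t))
       + (sg t * poly Q (sg t) + softplus t * (poly (pderiv Q) (sg t) * (sg t * (1 - sg t))))
       + ((2 * softplus t * sg t) * poly R (sg t) + (softplus t)\<^sup>2 * (poly (pderiv R) (sg t) * (sg t * (1 - sg t)))))"
    by (simp add: T algebra_simps power2_eq_square)
  have e: "teval T = (\<lambda>t. poly P (sg t) + softplus t * poly Q (sg t) + (softplus t)\<^sup>2 * poly R (sg t))"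
    by (rule ext) (simp add: T)
  show ?thesis unfolding e E by (rule D)
qed

lemma poly_bounded01: "\<exists>B\<ge>0. \<forall>y\<in>{0..1::real}. \<bar>poly P y\<bar> \<le> B"
proof -
  have "compact (poly P ` {0..1::real})"
    by (rule compact_continuous_image) (auto intro: continuous_intros)
  then obtain B where "\<forall>u\<in>poly P ` {0..1::real}. norm u \<le> B"
    using compact_imp_bounded bounded_iff by metis
  then show ?thesis by (intro exI[of _ "max B 0"]) auto
qed

lemma teval_growth: "\<exists>C>0. \<forall>t. \<bar>teval T t\<bar> \<le> C * (1 + \<bar>t\<bar>)\<^sup>2"
proof -
  obtain P Q R where T: "T = (P, Q, R)" by (cases T) auto
  obtain B1 where B1: "B1 \<ge> 0" "\<forall>y\<in>{0..1::real}. \<bar>poly P y\<bar> \<le> B1" using poly_bounded01 by blast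
  obtain B2 where B2: "B2 \<ge> 0" "\<forall>y\<in>{0..1::real}. \<bar>poly Q y\<bar> \<le> B2" using poly_bounded01 by blast
  obtain B3 where B3: "B3 \<ge> 0" "\<forall>y\<in>{0..1::real}. \<bar>poly R y\<bar> \<le> B3" using poly_bounded01 by blast
  show ?thesis
  proof (intro exI[of _ "B1 + B2 + B3 + 1"] conjI allI)
    fix t
    have s: "sg t \<in> {0..1}" using sg_pos[of t] sg_less1[of t] by auto
    have p1: "\<bar>poly P (sg t)\<bar> \<le> B1" "\<bar>poly Q (sg t)\<bar> \<le> B2" "\<bar>poly R (sg t)\<bar> \<le> B3"
      using s B1 B2 B3 by auto
    define u where "u = 1 + \<bar>t\<bar>"
    have u1: "1 \<le> u" unfolding u_def by simp
    have sp: "0 \<le> softplus t" "softplus t \<le> u" using softplus_nonneg softplus_le[of t] u_def by auto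
    have sp2: "(softplus t)\<^sup>2 \<le> u\<^sup>2" using sp by (intro power_mono) auto
    have uu0: "u \<le> u\<^sup>2" using mult_right_mono[OF u1, of u] u1 by (simp add: power2_eq_square)
    have uu: "u \<le> u\<^sup>2" "1 \<le> u\<^sup>2" using uu0 u1 by auto
    have "\<bar>teval T t\<bar> \<le> \<bar>poly P (sg t)\<bar> + softplus t * \<bar>poly Q (sg t)\<bar> + (softplus t)\<^sup>2 * \<bar>poly R (sg t)\<bar>"
    proof -
      have "\<bar>teval T t\<bar> \<le> \<bar>poly P (sg t)\<bar> + \<bar>softplus t * poly Q (sg t)\<bar> + \<bar>(softplus t)\<^sup>2 * poly R (sg t)\<bar>"
        by (simp add: T)
      then show ?thesis using sp by (simp add: abs_mult)
    qed
    also have "\<dots> \<le> B1 + u * B2 + u\<^sup>2 * B3"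
      using p1 sp sp2 by (intro add_mono mult_mono) auto
    also have "\<dots> \<le> B1 * u\<^sup>2 + B2 * u\<^sup>2 + B3 * u\<^sup>2"
    proof -
      have "B1 \<le> B1 * u\<^sup>2" using mult_left_mono[OF uu(2) B1(1)] by simp
      moreover have "u * B2 \<le> B2 * u\<^sup>2" using mult_left_mono[OF uu(1) B2(1)] by (simp add: mult.commute)
      ultimately show ?thesis by (simp add: mult.commute)
    qed
    also have "\<dots> \<le> (B1 + B2 + B3 + 1) * u\<^sup>2" using uu by (simp add: algebra_simps)
    finally show "\<bar>teval T t\<bar> \<le> (B1 + B2 + B3 + 1) * (1 + \<bar>t\<bar>)\<^sup>2" by (simp add: u_def)
  qed (use B1 B2 B3 in auto)
qed


fun qp :: "real \<Rightarrow> 'a::real_inner list \<Rightarrow> 'a \<Rightarrow> real" where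
  "qp c [] z = c + inner z z / 2"
| "qp c [v] z = inner z v"
| "qp c [v, u] z = inner v u"
| "qp c (v # u # w # vs) z = 0"

lemma qp_deriv: "((qp c vs) has_derivative (\<lambda>v. qp c (v # vs) z)) (at z)"
proof (cases vs)
  case Nil
  have e: "qp c vs = (\<lambda>z. c + inner z z / 2)" using Nil by (simp add: fun_eq_iff)
  show ?thesis unfolding e using Nil
    by (auto intro!: derivative_eq_intros simp: inner_commute)
next
  case (Cons v vs1)
  show ?thesis
  proof (cases vs1)
    case Nil
    have e: "qp c vs = (\<lambda>z. inner z v)" using Cons Nil by (simp add: fun_eq_iff)
    show ?thesis unfolding e using Cons Nil
      by (auto intro!: derivative_eq_intros)
  next
    case (Cons u vs2)
    show ?thesis
    proof (cases vs2)
      case Nil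
      have e: "qp c vs = (\<lambda>z. inner v u)" using \<open>vs = v # vs1\<close> Cons Nil by (simp add: fun_eq_iff)
      show ?thesis unfolding e using \<open>vs = v # vs1\<close> Cons Nil
        by (auto intro!: derivative_eq_intros)
    next
      case (Cons w vs3)
      have e: "qp c vs = (\<lambda>z. 0)" using \<open>vs = v # vs1\<close> \<open>vs1 = u # vs2\<close> Cons by (simp add: fun_eq_iff)
      show ?thesis unfolding e using \<open>vs = v # vs1\<close> \<open>vs1 = u # vs2\<close> Cons
        by (auto intro!: derivative_eq_intros)
    qed
  qed
qed

definition FF :: "real \<Rightarrow> ('i::finite \<Rightarrow> 'a::real_inner) \<Rightarrow> ('i \<Rightarrow> real) \<Rightarrow> ('i \<Rightarrow> nat \<Rightarrow> real \<Rightarrow> real)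
   \<Rightarrow> 'a list \<Rightarrow> 'a \<Rightarrow> real" where
  "FF c w b d vs z = qp c vs z + (\<Sum>i\<in>UNIV. d i (length vs) (inner (w i) z + b i) * prod_list (map (\<lambda>v. inner (w i) v) vs))"

lemma FF_deriv:
  assumes "\<And>i k t. (d i k has_real_derivative d i (Suc k) t) (at t)"
  shows "(FF c w b d vs has_derivative (\<lambda>v. FF c w b d (v # vs) z)) (at z)"
proof -
  have t: "((\<lambda>z. d i (length vs) (inner (w i) z + b i) * prod_list (map (\<lambda>v. inner (w i) v) vs))
      has_derivative (\<lambda>v. d i (Suc (length vs)) (inner (w i) z + b i) * (inner (w i) v * prod_list (map (\<lambda>v. inner (w i) v) vs)))) (at z)" for i
  proof -
    have l: "((\<lambda>z. inner (w i) z + b i) has_derivative (\<lambda>v. inner (w i) v)) (at z)"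
      by (auto intro!: derivative_eq_intros)
    have c: "((\<lambda>z. d i (length vs) (inner (w i) z + b i)) has_derivative
       (\<lambda>v. d i (Suc (length vs)) (inner (w i) z + b i) * inner (w i) v)) (at z)"
      using has_derivative_compose[OF l assms[of i "length vs" "inner (w i) z + b i", unfolded has_field_derivative_def]]
      by (simp add: o_def)
    show ?thesis
      by (rule has_derivative_eq_rhs[OF has_derivative_mult[OF c has_derivative_const]]) (simp add: fun_eq_iff mult_ac)
  qed
  show ?thesis unfolding FF_def[abs_def]
    by (rule has_derivative_eq_rhs[OF has_derivative_add[OF qp_deriv has_derivative_sum[OF t]]])
      (simp add: fun_eq_iff)
qed

lemma dderiv_FF:
  assumes "\<And>i k t. (d i k has_real_derivative d i (Suc k) t) (at t)"
  shows "dderiv (FF c w b d []) vs = FF c w b d vs"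
proof (induction vs)
  case Nil then show ?case by simp
next
  case (Cons v vs)
  show ?case
    by (rule ext) (simp add: Cons frechet_derivative_at[OF FF_deriv[where d=d, OF assms], symmetric])
qed


definition Tx :: "real \<Rightarrow> real \<Rightarrow> trip" where
  "Tx xi s2 = ([:xi\<^sup>2 / (2 * s2):], [:- xi / s2:], [:1 / (2 * s2):])"

definition dd :: "real^'m \<Rightarrow> real \<Rightarrow> 'm \<Rightarrow> nat \<Rightarrow> real \<Rightarrow> real" where
  "dd x s2 i k = teval ((tstep ^^ k) (Tx (x $ i) s2))"

lemma dd_deriv: "(dd x s2 i k has_real_derivative dd x s2 i (Suc k) t) (at t)"
  by (simp add: dd_def teval_deriv)

lemma dd0: "s2 > 0 \<Longrightarrow> dd x s2 i 0 t = (x $ i - softplus t)\<^sup>2 / (2 * s2)"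
  by (simp add: dd_def Tx_def power2_eq_square field_simps)

lemma prior_eq: "prior_density (z::real^'r) = (1 / sqrt (2 * pi)) ^ CARD('r) * exp (- (inner z z / 2))"
proof -
  have "prior_density z = (\<Prod>j\<in>UNIV. (1 / sqrt (2 * pi)) * exp (- (z $ j)\<^sup>2 / 2))"
    unfolding prior_density_def std_normal_density_def by simp
  also have "\<dots> = (1 / sqrt (2 * pi)) ^ CARD('r) * exp (\<Sum>j\<in>UNIV. - (z $ j)\<^sup>2 / 2)"
    by (subst prod.distrib) (simp add: exp_sum)
  also have "(\<Sum>j\<in>UNIV. - (z $ j)\<^sup>2 / 2) = - (inner z z / 2)"
    by (simp add: inner_vec_def power2_eq_square sum_negf sum_divide_distrib)
  finally show ?thesis .
qed

lemma lik_eq: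
  fixes W :: "real^'r^'m"
  assumes "s2 > 0"
  shows "lik_density W b s2 x z = (1 / sqrt (2 * pi * s2)) ^ CARD('m) *
     exp (- (\<Sum>i\<in>UNIV. dd x s2 i 0 (inner (W $ i) z + b $ i)))"
proof -
  have "lik_density W b s2 x z = (\<Prod>i\<in>UNIV. (1 / sqrt (2 * pi * s2)) *
      exp (- dd x s2 i 0 (inner (W $ i) z + b $ i)))"
    unfolding lik_density_def normal_density_def gen_def
    using assms by (simp add: dd0 matrix_vector_mul_component)
  also have "\<dots> = (1 / sqrt (2 * pi * s2)) ^ CARD('m) * exp (\<Sum>i\<in>UNIV. - dd x s2 i 0 (inner (W $ i) z + b $ i))"
    by (subst prod.distrib) (simp add: exp_sum)
  finally show ?thesis by (simp add: sum_negf)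
qed

definition SS :: "real^'r^'m \<Rightarrow> real^'m \<Rightarrow> real \<Rightarrow> real^'m \<Rightarrow> real^'r \<Rightarrow> real" where
  "SS W b s2 x = FF 0 (\<lambda>i. W $ i) (\<lambda>i. b $ i) (dd x s2) []"

definition AA :: "'r itself \<Rightarrow> 'm itself \<Rightarrow> real \<Rightarrow> real" where
  "AA _ _ s2 = (1 / sqrt (2 * pi)) ^ CARD('r) * (1 / sqrt (2 * pi * s2)) ^ CARD('m)"

lemma joint_eq:
  fixes W :: "real^'r^'m"
  assumes "s2 > 0"
  shows "prior_density z * lik_density W b s2 x z = AA TYPE('r) TYPE('m) s2 * exp (- SS W b s2 x (z::real^'r))"
proof -
  define q where "q = inner z z / 2"
  define r where "r = (\<Sum>i\<in>UNIV. dd x s2 i 0 (inner (W $ i) z + b $ i))"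
  have e1: "SS W b s2 x z = q + r" by (simp add: SS_def FF_def q_def r_def)
  have e2: "exp (- (q + r)) = exp (- q) * exp (- r)" by (simp add: exp_add[symmetric])
  show ?thesis
    unfolding prior_eq lik_eq[OF assms] e1 e2 AA_def q_def[symmetric] r_def[symmetric]
    by (simp only: mult_ac)
qed

lemma AA_pos: "s2 > 0 \<Longrightarrow> AA TYPE('r) TYPE('m) s2 > 0"
  by (simp add: AA_def)

lemma SS_deriv: "(SS W b s2 x has_derivative (\<lambda>v. FF 0 (\<lambda>i. W $ i) (\<lambda>i. b $ i) (dd x s2) [v] z)) (at z)"
  unfolding SS_def by (rule FF_deriv[where d="dd x s2", OF dd_deriv])

lemma SS_cont: "continuous_on UNIV (SS W b s2 x)"
  by (intro continuous_at_imp_continuous_on ballI has_derivative_continuous[OF SS_deriv])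

lemma Basis_vec_real: "(Basis :: (real^'r) set) = range (\<lambda>i. axis i 1)"
  by (auto simp: Basis_vec_def)

lemma prior_basis: "prior_density (z::real^'r) = (\<Prod>b\<in>Basis. std_normal_density (inner z b))"
proof -
  have "(\<Prod>b\<in>Basis. std_normal_density (inner z b)) = (\<Prod>i\<in>UNIV. std_normal_density (inner z (axis i (1::real))))"
    unfolding Basis_vec_real by (subst prod.reindex) (auto simp: inj_on_def axis_eq_axis)
  then show ?thesis by (simp add: prior_density_def inner_axis)
qed

lemma prior_meas: "(prior_density :: real^'r \<Rightarrow> real) \<in> borel_measurable borel"
proof -
  have e: "prior_density = (\<lambda>z::real^'r. (1 / sqrt (2 * pi)) ^ CARD('r) * exp (- (inner z z / 2)))"
    by (simp add: fun_eq_iff prior_eq)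
  show ?thesis unfolding e by (intro borel_measurable_continuous_onI continuous_intros) simp_all
qed

lemma prior_integrable: "integrable lborel (prior_density :: real^'r \<Rightarrow> real)"
proof (rule integrableI_nonneg)
  show "prior_density \<in> borel_measurable lborel" using prior_meas by simp
  show "AE x in lborel. 0 \<le> prior_density x"
    by (simp add: prior_density_def prod_nonneg)
  have "(\<integral>\<^sup>+z. ennreal (prior_density (z::real^'r)) \<partial>lborel) =
        (\<integral>\<^sup>+z. (\<Prod>b\<in>Basis. (\<lambda>b t. ennreal (std_normal_density t)) b (inner (z::real^'r) b)) \<partial>lborel)"
    by (simp add: prior_basis prod_ennreal)
  also have "\<dots> = (\<Prod>b\<in>(Basis :: (real^'r) set). (\<integral>\<^sup>+t. ennreal (std_normal_density t) \<partial>lborel))"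
    by (rule nn_integral_lborel_prod) auto
  also have "(\<integral>\<^sup>+t. ennreal (std_normal_density t) \<partial>lborel) = 1"
    by (simp add: nn_integral_eq_integral)
  finally show "(\<integral>\<^sup>+z. ennreal (prior_density (z::real^'r)) \<partial>lborel) < \<infinity>" by simp
qed


lemma joint_integrable:
  fixes W :: "real^'r^'m" and b x :: "real^'m"
  assumes "s2 > 0"
  shows "integrable lborel (\<lambda>z::real^'r. prior_density z * lik_density W b s2 x z)"
proof (rule Bochner_Integration.integrable_bound[OF integrable_mult_right[OF prior_integrable, of "(1 / sqrt (2 * pi * s2)) ^ CARD('m)"]])
  have e: "(\<lambda>z::real^'r. prior_density z * lik_density W b s2 x z) = (\<lambda>z. AA TYPE('r) TYPE('m) s2 * exp (- SS W b s2 x z))"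
    by (simp add: fun_eq_iff joint_eq[OF assms])
  show "(\<lambda>z::real^'r. prior_density z * lik_density W b s2 x z) \<in> borel_measurable lborel"
    unfolding e using SS_cont[of W b s2 x]
    by (auto intro!: borel_measurable_continuous_onI continuous_intros)
  have "lik_density W b s2 x z \<le> (1 / sqrt (2 * pi * s2)) ^ CARD('m)" for z
    unfolding lik_density_def
  proof -
    have "(\<Prod>i\<in>UNIV. normal_density (gen W b z $ i) (sqrt s2) (x $ i)) \<le> (\<Prod>i\<in>(UNIV::'m set). 1 / sqrt (2 * pi * s2))"
      using assms by (intro prod_mono) (auto simp: normal_density_def intro!: divide_right_mono)
    then show "(\<Prod>i\<in>UNIV. normal_density (gen W b z $ i) (sqrt s2) (x $ i)) \<le> (1 / sqrt (2 * pi * s2)) ^ CARD('m)"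
      by simp
  qed
  moreover have "0 \<le> lik_density W b s2 x z" "0 \<le> prior_density z" for z :: "real^'r"
    by (auto simp: lik_density_def prior_density_def prod_nonneg)
  ultimately have "norm (prior_density z * lik_density W b s2 x z) \<le>
      norm ((1 / sqrt (2 * pi * s2)) ^ CARD('m) * prior_density (z::real^'r))" for z
    using assms by (simp add: abs_mult mult.commute mult_left_mono)
  then show "AE z in lborel. norm (prior_density z * lik_density W b s2 x z) \<le>
      norm ((1 / sqrt (2 * pi * s2)) ^ CARD('m) * prior_density (z::real^'r))"
    by simp
qed

lemma joint_integral_pos:
  fixes W :: "real^'r^'m" and b x :: "real^'m"
  assumes "s2 > 0"
  shows "(\<integral>z. prior_density z * lik_density W b s2 x (z::real^'r) \<partial>lborel) > 0"
proof -
  let ?f = "\<lambda>z::real^'r. prior_density z * lik_density W b s2 x z"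
  have pos: "?f z > 0" for z
    unfolding joint_eq[OF assms] by (simp add: AA_pos[OF assms])
  have nn: "0 \<le> (\<integral>z. ?f z \<partial>lborel)"
    using pos by (intro integral_nonneg_AE) (auto intro: less_imp_le)
  have "(\<integral>z. ?f z \<partial>lborel) \<noteq> 0"
  proof
    assume z: "(\<integral>z. ?f z \<partial>lborel) = 0"
    have ae: "AE z in lborel. 0 \<le> ?f z" using pos by (simp add: less_imp_le)
    have "AE z in lborel. ?f z = 0"
      using integral_nonneg_eq_0_iff_AE[OF joint_integrable[OF assms, of W b x] ae] z by simp
    then have "AE z::real^'r in lborel. False"
      using pos by (auto elim: AE_mp simp: less_le)
    from AE_E2[OF this] show False by simp
  qed
  with nn show ?thesis by simp
qed


definition G1 :: "real \<Rightarrow> real \<Rightarrow> real \<Rightarrow> real" where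
  "G1 xi s2 t = (softplus t - xi) * sg t / s2"
definition G2 :: "real \<Rightarrow> real \<Rightarrow> real \<Rightarrow> real" where
  "G2 xi s2 t = (sg t * sg t + (softplus t - xi) * (sg t * (1 - sg t))) / s2"

lemma G0_deriv: "s2 > 0 \<Longrightarrow> ((\<lambda>t. (xi - softplus t)\<^sup>2 / (2 * s2)) has_real_derivative G1 xi s2 t) (at t)"
proof -
  assume s: "s2 > 0"
  have a: "((\<lambda>t. xi - softplus t) has_real_derivative 0 - sg t) (at t)"
    by (intro DERIV_diff DERIV_const softplus_deriv)
  have b: "((\<lambda>t. (xi - softplus t)\<^sup>2) has_real_derivative of_nat 2 * ((0 - sg t) * (xi - softplus t) ^ (2 - Suc 0))) (at t)"
    by (rule DERIV_power[OF a])
  have c: "((\<lambda>t. (xi - softplus t)\<^sup>2 / (2 * s2)) has_real_derivative (of_nat 2 * ((0 - sg t) * (xi - softplus t) ^ (2 - Suc 0))) / (2 * s2)) (at t)"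
    by (rule DERIV_cdivide[OF b])
  show ?thesis by (rule DERIV_cong[OF c]) (use s in \<open>simp add: G1_def field_simps\<close>)
qed

lemma G1_deriv: "(G1 xi s2 has_real_derivative G2 xi s2 t) (at t)"
proof -
  have a: "((\<lambda>t. softplus t - xi) has_real_derivative sg t - 0) (at t)"
    by (intro DERIV_diff DERIV_const softplus_deriv)
  have b: "((\<lambda>t. (softplus t - xi) * sg t) has_real_derivative (softplus t - xi) * (sg t * (1 - sg t)) + (sg t - 0) * sg t) (at t)"
    by (rule DERIV_mult'[OF a sg_deriv])
  have c: "((\<lambda>t. (softplus t - xi) * sg t / s2) has_real_derivative ((softplus t - xi) * (sg t * (1 - sg t)) + (sg t - 0) * sg t) / s2) (at t)"
    by (rule DERIV_cdivide[OF b])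
  have e: "G1 xi s2 = (\<lambda>t. (softplus t - xi) * sg t / s2)" by (simp add: fun_eq_iff G1_def)
  show ?thesis unfolding e using c by (simp add: G2_def algebra_simps)
qed

lemma dd1: "s2 > 0 \<Longrightarrow> dd x s2 i 1 = G1 (x $ i) s2"
proof
  fix t assume s: "s2 > 0"
  have e: "dd x s2 i 0 = (\<lambda>t. (x $ i - softplus t)\<^sup>2 / (2 * s2))" by (simp add: fun_eq_iff dd0[OF s])
  show "dd x s2 i 1 t = G1 (x $ i) s2 t"
    using DERIV_unique[OF dd_deriv[of x s2 i 0 t] G0_deriv[OF s, of "x $ i" t, folded e]] by simp
qed

lemma dd2: "s2 > 0 \<Longrightarrow> dd x s2 i 2 = G2 (x $ i) s2"
proof
  fix t assume s: "s2 > 0"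
  show "dd x s2 i 2 t = G2 (x $ i) s2 t"
    using DERIV_unique[OF dd_deriv[of x s2 i 1 t] G1_deriv[of "x $ i" s2 t, folded dd1[OF s]]]
    by (simp add: numeral_2_eq_2)
qed

lemma sg_le_exp: "sg t \<le> exp t"
  unfolding sg_def by (simp add: divide_le_eq)

lemma G2_bound: "s2 > 0 \<Longrightarrow> \<bar>G2 xi s2 t\<bar> \<le> (2 + \<bar>xi\<bar>) / s2"
proof -
  assume s: "s2 > 0"
  have s0: "0 < sg t" "sg t < 1" using sg_pos sg_less1 by auto
  have p: "0 \<le> sg t * (1 - sg t)" "sg t * (1 - sg t) \<le> 1" using s0 by (auto simp: mult_le_one)
  have q: "softplus t * (sg t * (1 - sg t)) \<le> 1"
  proof -
    have "exp t * (1 - sg t) = sg t" unfolding sg_def by (simp add: field_simps)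
    have "softplus t * (sg t * (1 - sg t)) \<le> exp t * (sg t * (1 - sg t))"
      using p softplus_le_exp by (intro mult_right_mono) auto
    also have "\<dots> = sg t * (exp t * (1 - sg t))" by (simp only: mult_ac)
    also have "\<dots> = sg t * sg t" using \<open>exp t * (1 - sg t) = sg t\<close> by simp
    also have "\<dots> \<le> 1" using s0 by (simp add: mult_le_one)
    finally show ?thesis .
  qed
  have q0: "0 \<le> softplus t * (sg t * (1 - sg t))" using p softplus_nonneg by simp
  have r: "\<bar>xi * (sg t * (1 - sg t))\<bar> \<le> \<bar>xi\<bar>" 
  proof -
    have "\<bar>xi * (sg t * (1 - sg t))\<bar> = \<bar>xi\<bar> * (sg t * (1 - sg t))" using p abs_of_nonneg[OF p(1)] by (simp only: abs_mult)
    also have "\<dots> \<le> \<bar>xi\<bar> * 1" using p by (intro mult_left_mono) auto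
    finally show ?thesis by simp
  qed
  have "\<bar>sg t * sg t + (softplus t - xi) * (sg t * (1 - sg t))\<bar> \<le> 2 + \<bar>xi\<bar>"
  proof -
    have "sg t * sg t \<le> 1" "0 \<le> sg t * sg t" using s0 by (auto simp: mult_le_one)
    moreover have "sg t * sg t + (softplus t - xi) * (sg t * (1 - sg t)) =
      sg t * sg t + softplus t * (sg t * (1 - sg t)) - xi * (sg t * (1 - sg t))"
      by (simp add: algebra_simps)
    moreover have "- \<bar>xi\<bar> \<le> xi * (sg t * (1 - sg t))" "xi * (sg t * (1 - sg t)) \<le> \<bar>xi\<bar>"
      using r by linarith+
    ultimately show ?thesis using q q0 by (simp only: abs_le_iff) linarith
  qed
  then show ?thesis using s by (simp add: G2_def abs_divide divide_right_mono)
qed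


lemma exp_neg_mult_le: "t \<le> 0 \<Longrightarrow> exp t * (- t) \<le> (1::real)"
proof -
  assume t: "t \<le> 0"
  have "- t \<le> exp (- t)" using exp_ge_add_one_self[of "-t"] by linarith
  then have "exp t * (- t) \<le> exp t * exp (- t)" by (intro mult_left_mono) auto
  also have "\<dots> = 1" by (simp add: exp_minus)
  finally show ?thesis .
qed

lemma phi_bound:
  fixes \<beta> :: real
  assumes "0 < \<beta>" "\<beta> \<le> 1/4"
  shows "(softplus t - xi) * sg t * (t - bi) - \<beta> * (xi - softplus t)\<^sup>2 \<ge> - 2 * (\<bar>xi\<bar> + \<bar>bi\<bar> + 1)\<^sup>2"
proof -
  define s where "s = softplus t"
  define g where "g = sg t"
  define E where "E = \<bar>xi\<bar> + \<bar>bi\<bar> + 1"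
  have g01: "0 < g" "g < 1" unfolding g_def using sg_pos sg_less1 by auto
  have s0: "0 \<le> s" unfolding s_def using softplus_nonneg by simp
  have E1: "1 \<le> E" unfolding E_def by simp
  show ?thesis
  proof (cases "t \<le> 0")
    case True
    have "exp t \<le> 1" using True by simp
    then have s1: "s \<le> 1" unfolding s_def using softplus_le_exp[of t] by linarith
    have gt: "g * (- t) \<le> 1"
    proof -
      have "g * (- t) \<le> exp t * (- t)" unfolding g_def using sg_le_exp[of t] True by (intro mult_right_mono) auto
      then show ?thesis using exp_neg_mult_le[OF True] by linarith
    qed
    have a1: "\<bar>g * (t - bi)\<bar> \<le> 1 + \<bar>bi\<bar>"
    proof -
      have "\<bar>g * (t - bi)\<bar> = g * \<bar>t - bi\<bar>" using g01 by (simp add: abs_mult)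
      also have "\<dots> \<le> g * (- t + \<bar>bi\<bar>)" using g01 True by (intro mult_left_mono) auto
      also have "\<dots> = g * (- t) + g * \<bar>bi\<bar>" by (simp add: algebra_simps)
      finally have "\<bar>g * (t - bi)\<bar> \<le> g * (- t) + g * \<bar>bi\<bar>" .
      moreover have "g * \<bar>bi\<bar> \<le> \<bar>bi\<bar>" using g01 by (intro mult_left_le_one_le) auto
      ultimately show ?thesis using gt by linarith
    qed
    have a2: "\<bar>s - xi\<bar> \<le> 1 + \<bar>xi\<bar>" using s0 s1 by linarith
    have "\<bar>(s - xi) * g * (t - bi)\<bar> \<le> (1 + \<bar>xi\<bar>) * (1 + \<bar>bi\<bar>)"
      using a1 a2 by (simp add: abs_mult mult.assoc mult_mono)
    also have "\<dots> \<le> E * E" unfolding E_def by (intro mult_mono) auto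
    finally have b1: "\<bar>(s - xi) * g * (t - bi)\<bar> \<le> E * E" .
    have "\<beta> * (xi - s)\<^sup>2 \<le> 1 * (xi - s)\<^sup>2" using assms by (intro mult_right_mono) auto
    also have "(xi - s)\<^sup>2 \<le> E * E"
    proof -
      have "\<bar>xi - s\<bar> \<le> E" using a2 unfolding E_def by linarith
      then have "\<bar>xi - s\<bar> * \<bar>xi - s\<bar> \<le> E * E" by (intro mult_mono) auto
      then show ?thesis by (simp add: power2_eq_square)
    qed
    finally have b2: "\<beta> * (xi - s)\<^sup>2 \<le> E * E" by simp
    have "(s - xi) * g * (t - bi) - \<beta> * (xi - s)\<^sup>2 \<ge> - 2 * (E * E)" using b1 b2 by linarith
    then show ?thesis by (simp add: s_def g_def E_def power2_eq_square)
  next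
    case False
    have st: "t \<le> s"
    proof -
      have "ln (exp t) \<le> ln (1 + exp t)" by (subst ln_le_cancel_iff) auto
      then show ?thesis by (simp add: s_def softplus_def)
    qed
    have st2: "s \<le> t + 1" unfolding s_def using softplus_le[of t] False by simp
    have gh: "1/2 \<le> g" unfolding g_def sg_def using False by (simp add: field_simps)
    define u where "u = s - xi"
    define e where "e = xi - bi - (s - t)"
    have eE: "\<bar>e\<bar> \<le> E" unfolding e_def E_def using st st2 by linarith
    have te: "t - bi = u + e" unfolding u_def e_def by simp
    have "(s - xi) * g * (t - bi) - \<beta> * (xi - s)\<^sup>2 = (g - \<beta>) * (u * u) + g * (u * e)"
      unfolding te by (simp add: u_def power2_eq_square algebra_simps)
    also have "\<dots> \<ge> (1/4) * (u * u) - \<bar>u\<bar> * E"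
    proof -
      have "(1/4) * (u * u) \<le> (g - \<beta>) * (u * u)" using gh assms by (intro mult_right_mono) auto
      moreover have "- (\<bar>u\<bar> * E) \<le> g * (u * e)"
      proof -
        have "\<bar>u\<bar> * \<bar>e\<bar> \<le> \<bar>u\<bar> * E" using eE by (intro mult_left_mono) auto
        then have "g * (\<bar>u\<bar> * \<bar>e\<bar>) \<le> 1 * (\<bar>u\<bar> * E)" using g01 eE by (intro mult_mono) auto
        then have "\<bar>g * (u * e)\<bar> \<le> 1 * (\<bar>u\<bar> * E)" using g01 by (simp add: abs_mult)
        then show ?thesis by linarith
      qed
      ultimately show ?thesis by linarith
    qed
    finally have "(s - xi) * g * (t - bi) - \<beta> * (xi - s)\<^sup>2 \<ge> (1/4) * (u * u) - \<bar>u\<bar> * E" .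
    moreover have "(1/4) * (u * u) - \<bar>u\<bar> * E \<ge> - (E * E)"
    proof -
      have "0 \<le> (\<bar>u\<bar> / 2 - E)\<^sup>2" by simp
      also have "(\<bar>u\<bar> / 2 - E)\<^sup>2 = (1/4) * (u * u) - \<bar>u\<bar> * E + E * E"
        by (simp add: power2_eq_square algebra_simps abs_mult_self_eq)
      finally show ?thesis by linarith
    qed
    moreover have "0 \<le> E * E" by simp
    ultimately have "(s - xi) * g * (t - bi) - \<beta> * (xi - s)\<^sup>2 \<ge> - 2 * (E * E)" by linarith
    then show ?thesis by (simp add: s_def g_def E_def power2_eq_square)
  qed
qed


lemma prod_list_bound:
  fixes w :: "'a::real_inner"
  shows "(\<forall>v\<in>set vs. norm v \<le> 1) \<Longrightarrow> \<bar>prod_list (map (\<lambda>v. inner w v) vs)\<bar> \<le> norm w ^ length vs"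
proof (induction vs)
  case Nil then show ?case by simp
next
  case (Cons v vs)
  have a: "\<bar>inner w v\<bar> \<le> norm w"
  proof -
    have "\<bar>inner w v\<bar> \<le> norm w * norm v" by (rule Cauchy_Schwarz_ineq2)
    also have "\<dots> \<le> norm w * 1" using Cons.prems by (intro mult_left_mono) auto
    finally show ?thesis by simp
  qed
  have b: "\<bar>prod_list (map (\<lambda>v. inner w v) vs)\<bar> \<le> norm w ^ length vs" using Cons by simp
  have "\<bar>inner w v * prod_list (map (\<lambda>v. inner w v) vs)\<bar> \<le> norm w * norm w ^ length vs"
    unfolding abs_mult using a b by (intro mult_mono) auto
  then show ?case by simp
qed

lemma norm_le_sq: "norm (z::'a::real_normed_vector) \<le> 1 + norm z ^ 2"
proof (cases "norm z \<le> 1")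
  case True then show ?thesis by (simp add: add_increasing2)
next
  case False
  then have "norm z * 1 \<le> norm z * norm z" by (intro mult_left_mono) auto
  then show ?thesis by (simp add: power2_eq_square)
qed

lemma qp_bound:
  fixes z :: "'a::real_inner"
  assumes "\<forall>v\<in>set vs. norm v \<le> 1"
  shows "\<bar>qp c vs z\<bar> \<le> \<bar>c\<bar> + 1 + norm z ^ 2"
proof -
  consider "vs = []" | v where "vs = [v]" | v u where "vs = [v, u]" | v u w vs' where "vs = v # u # w # vs'"
    by (metis list.exhaust)
  then show ?thesis
  proof cases
    case 1
    have "inner z z = norm z ^ 2" by (simp add: power2_norm_eq_inner)
    moreover have "0 \<le> norm z ^ 2" by simp
    ultimately have "\<bar>c + inner z z / 2\<bar> \<le> \<bar>c\<bar> + norm z ^ 2" by (simp only: abs_le_iff) linarith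
    then show ?thesis using 1 by simp
  next
    case (2 v)
    have "\<bar>inner z v\<bar> \<le> norm z * norm v" by (rule Cauchy_Schwarz_ineq2)
    also have "\<dots> \<le> norm z * 1" using assms 2 by (intro mult_left_mono) auto
    finally show ?thesis using 2 norm_le_sq[of z] by simp
  next
    case (3 v u)
    have "\<bar>inner v u\<bar> \<le> norm v * norm u" by (rule Cauchy_Schwarz_ineq2)
    also have "\<dots> \<le> 1 * 1" using assms 3 by (intro mult_mono) auto
    finally have "\<bar>inner v u\<bar> \<le> 1" by simp
    moreover have "0 \<le> norm z ^ 2" "0 \<le> \<bar>c\<bar>" by simp_all
    moreover have "qp c vs z = inner v u" using 3 by simp
    ultimately show ?thesis by linarith
  next
    case (4 v u w vs')
    then show ?thesis by simp
  qed
qed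

lemma inner_le1: "norm u \<le> 1 \<Longrightarrow> \<bar>inner (w::'a::real_inner) u\<bar> \<le> norm w"
proof -
  assume u: "norm u \<le> 1"
  have "\<bar>inner w u\<bar> \<le> norm w * norm u" by (rule Cauchy_Schwarz_ineq2)
  also have "\<dots> \<le> norm w * 1" using u by (intro mult_left_mono) auto
  finally show ?thesis by simp
qed

lemma hess_term:
  fixes w u v :: "'a::real_inner"
  assumes "s2 > 0" "norm u \<le> 1" "norm v \<le> 1"
  shows "\<bar>G2 xi s2 t * (inner w u * inner w v)\<bar> \<le> (2 + \<bar>xi\<bar>) / s2 * (norm w)\<^sup>2"
proof -
  have "\<bar>inner w u * inner w v\<bar> \<le> norm w * norm w"
    unfolding abs_mult using inner_le1[OF assms(2)] inner_le1[OF assms(3)] by (intro mult_mono) auto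
  moreover have "\<bar>G2 xi s2 t\<bar> \<le> (2 + \<bar>xi\<bar>) / s2" by (rule G2_bound[OF assms(1)])
  ultimately have "\<bar>G2 xi s2 t\<bar> * \<bar>inner w u * inner w v\<bar> \<le> (2 + \<bar>xi\<bar>) / s2 * (norm w * norm w)"
    using assms(1) by (intro mult_mono) auto
  then show ?thesis by (simp add: abs_mult power2_eq_square)
qed

lemma lin_aux:
  fixes sE S1 bS0 a b' bq2 bc c q :: real
  shows "- sE \<le> S1 / 2 - bS0 \<Longrightarrow> a \<le> b' \<Longrightarrow> bq2 + b' = q / 8 \<Longrightarrow> bc \<le> c \<Longrightarrow> 0 \<le> q \<Longrightarrow>
    bc + bq2 + bS0 + a - (c + sE + 1) \<le> 1 / 2 * (q + S1)"
  unfolding distrib_left by linarith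

theorem corollary1:
  fixes W :: "real^'r^'m" and b :: "real^'m" and s2 :: real and x :: "real^'m"
  assumes "s2 > 0"
  defines "V \<equiv> potential W b s2 x"
  shows "(\<exists>c. \<forall>z. c \<le> V z) \<and> hessian_bounded V \<and> smooth_poly V \<and>
         (\<forall>\<gamma>>0. assumption_A2 V \<gamma>)"
proof -
  have s2: "s2 > 0" by (rule assms(1))
  define I where "I = (\<integral>z. prior_density z * lik_density W b s2 x (z::real^'r) \<partial>lborel)"
  have Ipos: "I > 0" unfolding I_def by (rule joint_integral_pos[OF s2])
  define A where "A = AA TYPE('r) TYPE('m) s2"
  have Apos: "A > 0" unfolding A_def by (rule AA_pos[OF s2])
  define c0 where "c0 = - ln (A / I)"
  define w where "w = (\<lambda>i. W $ i)"
  define bb where "bb = (\<lambda>i. b $ i)"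
  define d where "d = dd x s2"
  have dd': "\<And>i k t. (d i k has_real_derivative d i (Suc k) t) (at t)"
    unfolding d_def by (rule dd_deriv)
  have Veq: "V = FF c0 w bb d []"
  proof
    fix z :: "real^'r"
    have "post_density W b s2 x z = prior_density z * lik_density W b s2 x z / I"
      by (simp add: post_density_def I_def)
    also have "\<dots> = (A / I) * exp (- SS W b s2 x z)"
      unfolding joint_eq[OF s2] A_def by simp
    finally have "post_density W b s2 x z = (A / I) * exp (- SS W b s2 x z)" .
    moreover have "ln ((A / I) * exp (- SS W b s2 x z)) = ln (A / I) + ln (exp (- SS W b s2 x z))"
      using Apos Ipos by (intro ln_mult_pos) auto
    ultimately have "V z = - ln (A / I) + SS W b s2 x z"
      unfolding V_def potential_def by simp
    also have "\<dots> = FF c0 w bb d [] z"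
      unfolding c0_def SS_def FF_def w_def bb_def d_def by simp
    finally show "V z = FF c0 w bb d [] z" .
  qed
  have dV: "\<And>vs. dderiv V vs = FF c0 w bb d vs"
    unfolding Veq by (rule dderiv_FF[where d=d, OF dd'])
  have hasd: "\<And>vs z. (FF c0 w bb d vs has_derivative (\<lambda>v. FF c0 w bb d (v # vs) z)) (at z)"
    by (rule FF_deriv[where d=d, OF dd'])
  have d0: "\<And>i t. d i 0 t = (x $ i - softplus t)\<^sup>2 / (2 * s2)" unfolding d_def by (rule dd0[OF s2])
  have d1: "\<And>i. d i 1 = G1 (x $ i) s2" unfolding d_def by (rule dd1[OF s2])
  have d2: "\<And>i. d i 2 = G2 (x $ i) s2" unfolding d_def by (rule dd2[OF s2])
  have P1: "\<exists>c. \<forall>z. c \<le> V z"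
  proof (intro exI allI)
    fix z :: "real^'r"
    have "V z = c0 + inner z z / 2 + (\<Sum>i\<in>UNIV. d i 0 (inner (w i) z + bb i))"
      unfolding Veq by (simp add: FF_def)
    moreover have "0 \<le> (\<Sum>i\<in>UNIV. d i 0 (inner (w i) z + bb i))"
      using s2 by (intro sum_nonneg) (simp add: d0)
    moreover have "0 \<le> inner z z" by simp
    ultimately show "c0 \<le> V z" by linarith
  qed
  have P2: "hessian_bounded V"
    unfolding hessian_bounded_def
  proof (intro exI conjI allI impI)
    define K where "K = (\<Sum>i\<in>UNIV. (2 + \<bar>x $ i\<bar>) / s2 * (norm (w i))\<^sup>2)"
    have K0: "0 \<le> K" unfolding K_def using s2 by (intro sum_nonneg) auto
    show "0 < 1 + K" using K0 by simp
    fix z u v :: "real^'r"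
    assume u: "norm u \<le> 1" and v: "norm v \<le> 1"
    have e: "dderiv V [u, v] z = inner u v + (\<Sum>i\<in>UNIV. G2 (x $ i) s2 (inner (w i) z + bb i) * (inner (w i) u * inner (w i) v))"
      unfolding dV by (simp add: FF_def d2 numeral_2_eq_2[symmetric])
    have "\<bar>inner u v\<bar> \<le> 1" using inner_le1[OF v, of u] u by simp
    moreover have "\<bar>\<Sum>i\<in>UNIV. G2 (x $ i) s2 (inner (w i) z + bb i) * (inner (w i) u * inner (w i) v)\<bar> \<le> K"
      unfolding K_def
      by (rule order.trans[OF sum_abs]) (intro sum_mono hess_term[OF s2 u v])
    ultimately show "\<bar>dderiv V [u, v] z\<bar> \<le> 1 + K" unfolding e by linarith
  qed
  have P3: "smooth_poly V"
    unfolding smooth_poly_def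
  proof (intro conjI allI)
    fix vs and z :: "real^'r"
    show "dderiv V vs differentiable (at z)"
      unfolding dV differentiable_def by (rule exI, rule hasd)
  next
    fix k :: nat
    have "\<forall>i. \<exists>C. C > 0 \<and> (\<forall>t. \<bar>d i k t\<bar> \<le> C * (1 + \<bar>t\<bar>)\<^sup>2)"
      unfolding d_def dd_def using teval_growth by blast
    then have "\<exists>Cf. \<forall>i. Cf i > 0 \<and> (\<forall>t. \<bar>d i k t\<bar> \<le> Cf i * (1 + \<bar>t\<bar>)\<^sup>2)" by (rule choice)
    then obtain Cf where Cf: "\<And>i. Cf i > 0" "\<And>i t. \<bar>d i k t\<bar> \<le> Cf i * (1 + \<bar>t\<bar>)\<^sup>2" by blast
    define B where "B = 1 + (\<Sum>i\<in>UNIV. \<bar>bb i\<bar> + norm (w i))"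
    have Bs: "\<bar>bb i\<bar> + norm (w i) \<le> (\<Sum>i\<in>UNIV. \<bar>bb i\<bar> + norm (w i))" for i
      by (rule member_le_sum) auto
    have Bs0: "0 \<le> (\<Sum>i\<in>UNIV. \<bar>bb i\<bar> + norm (w i))" by (intro sum_nonneg) auto
    have B1: "1 \<le> B" using Bs0 unfolding B_def by simp
    have Bw: "norm (w i) \<le> B" and Bb: "\<bar>bb i\<bar> \<le> B" for i
      using Bs[of i] Bs0 norm_ge_zero[of "w i"] abs_ge_zero[of "bb i"] unfolding B_def by linarith+
    define C where "C = \<bar>c0\<bar> + 1 + (\<Sum>i\<in>UNIV. Cf i * B ^ k * (8 * B\<^sup>2))"
    have Csum0: "0 \<le> (\<Sum>i\<in>UNIV. Cf i * B ^ k * (8 * B\<^sup>2))"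
      using Cf(1) B1 by (intro sum_nonneg) (auto intro!: mult_nonneg_nonneg less_imp_le)
    show "\<exists>C>0. \<exists>n. \<forall>x vs. length vs = k \<longrightarrow> (\<forall>v\<in>set vs. norm v \<le> 1) \<longrightarrow>
         \<bar>dderiv V vs x\<bar> \<le> C * (1 + norm x ^ n)"
    proof (intro exI[of _ C] conjI exI[of _ "2::nat"] allI impI)
      show "0 < C" unfolding C_def using Csum0 by simp
      fix z :: "real^'r" and vs :: "(real^'r) list"
      assume len: "length vs = k" and nv: "\<forall>v\<in>set vs. norm v \<le> 1"
      define nz where "nz = norm z"
      have nz0: "0 \<le> nz" unfolding nz_def by simp
      have sq: "(1 + nz)\<^sup>2 \<le> 2 * (1 + nz ^ 2)"
      proof -
        have "0 \<le> (nz - 1)\<^sup>2" by simp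
        then show ?thesis by (simp add: power2_eq_square algebra_simps)
      qed
      have tmb: "\<bar>d i k (inner (w i) z + bb i) * prod_list (map (\<lambda>v. inner (w i) v) vs)\<bar>
          \<le> Cf i * B ^ k * (8 * B\<^sup>2) * (1 + nz ^ 2)" for i
      proof -
        define t where "t = inner (w i) z + bb i"
        have "\<bar>inner (w i) z\<bar> \<le> norm (w i) * nz" unfolding nz_def by (rule Cauchy_Schwarz_ineq2)
        also have "\<dots> \<le> B * nz" using Bw[of i] nz0 by (intro mult_right_mono) auto
        finally have "\<bar>t\<bar> \<le> B * nz + B" unfolding t_def using Bb[of i] by linarith
        moreover have "0 \<le> B * nz" using B1 nz0 by simp
        ultimately have "1 + \<bar>t\<bar> \<le> 2 * B * (1 + nz)" using B1 by (simp add: algebra_simps)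
        then have "(1 + \<bar>t\<bar>)\<^sup>2 \<le> (2 * B * (1 + nz))\<^sup>2" by (intro power_mono) auto
        also have "\<dots> = 4 * B\<^sup>2 * (1 + nz)\<^sup>2" by (simp add: power_mult_distrib)
        also have "\<dots> \<le> 4 * B\<^sup>2 * (2 * (1 + nz ^ 2))" using sq by (intro mult_left_mono) auto
        finally have t2: "(1 + \<bar>t\<bar>)\<^sup>2 \<le> 8 * B\<^sup>2 * (1 + nz ^ 2)" by (simp add: algebra_simps)
        have dB: "\<bar>d i k t\<bar> \<le> Cf i * (8 * B\<^sup>2 * (1 + nz ^ 2))"
          using Cf(2)[of i t] mult_left_mono[OF t2 less_imp_le[OF Cf(1)[of i]]] by linarith
        have pB: "\<bar>prod_list (map (\<lambda>v. inner (w i) v) vs)\<bar> \<le> B ^ k"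
          using prod_list_bound[OF nv, of "w i"] power_mono[OF Bw[of i], of k] len by simp
        have "\<bar>d i k t * prod_list (map (\<lambda>v. inner (w i) v) vs)\<bar> \<le> (Cf i * (8 * B\<^sup>2 * (1 + nz ^ 2))) * B ^ k"
          unfolding abs_mult using dB pB by (intro mult_mono) auto
        then show ?thesis unfolding t_def by (simp add: algebra_simps)
      qed
      have "\<bar>FF c0 w bb d vs z\<bar> \<le> \<bar>qp c0 vs z\<bar> + (\<Sum>i\<in>UNIV. \<bar>d i k (inner (w i) z + bb i) * prod_list (map (\<lambda>v. inner (w i) v) vs)\<bar>)"
        unfolding FF_def len by (rule order.trans[OF abs_triangle_ineq add_left_mono[OF sum_abs]])
      also have "\<dots> \<le> (\<bar>c0\<bar> + 1 + nz ^ 2) + (\<Sum>i\<in>UNIV. Cf i * B ^ k * (8 * B\<^sup>2) * (1 + nz ^ 2))"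
        using qp_bound[OF nv, of c0 z] unfolding nz_def by (intro add_mono sum_mono tmb[unfolded nz_def]) auto
      also have "\<dots> \<le> (\<bar>c0\<bar> + 1) * (1 + nz ^ 2) + (\<Sum>i\<in>UNIV. Cf i * B ^ k * (8 * B\<^sup>2)) * (1 + nz ^ 2)"
      proof -
        have "\<bar>c0\<bar> + 1 + nz ^ 2 \<le> (\<bar>c0\<bar> + 1) * (1 + nz ^ 2)"
          by (simp add: algebra_simps)
        then show ?thesis by (simp add: sum_distrib_right)
      qed
      also have "\<dots> = C * (1 + nz ^ 2)" unfolding C_def by (simp add: algebra_simps)
      finally show "\<bar>dderiv V vs z\<bar> \<le> C * (1 + norm z ^ 2)" unfolding dV nz_def .
    qed
  qed
  have P4: "\<forall>\<gamma>>0. assumption_A2 V \<gamma>"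
  proof (intro allI impI)
    fix \<gamma> :: real assume g: "\<gamma> > 0"
    define \<beta> where "\<beta> = 1 / (4 * (1 + \<gamma>\<^sup>2))"
    have h4: "4 + 4 * \<gamma>\<^sup>2 \<noteq> 0" "0 < 4 + 4 * \<gamma>\<^sup>2" "0 < 1 + \<gamma>\<^sup>2" using zero_le_power2[of \<gamma>] by linarith+
    have b0: "0 < \<beta>" unfolding \<beta>_def by (simp add: add_pos_nonneg)
    have b4: "\<beta> \<le> 1/4" unfolding \<beta>_def using h4 by (simp add: field_simps)
    have bg: "\<beta> * (1 + \<gamma>\<^sup>2) = 1/4" unfolding \<beta>_def using h4 by (simp add: field_simps)
    define E where "E = (\<lambda>i. \<bar>x $ i\<bar> + \<bar>bb i\<bar> + 1)"
    define \<alpha> where "\<alpha> = \<bar>c0\<bar> + (\<Sum>i\<in>UNIV. (E i)\<^sup>2 / s2) + 1"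
    have sE: "0 \<le> (\<Sum>i\<in>UNIV. (E i)\<^sup>2 / s2)" using s2 by (intro sum_nonneg) auto
    have Cb: "C_beta \<beta> \<le> \<beta> / 2"
    proof -
      have "\<beta> * (2 - \<beta>) \<le> \<beta> / 2 * (8 * (1 - \<beta>))"
        using b0 b4 by (simp add: algebra_simps)
      then show ?thesis unfolding C_beta_def using b4 by (simp add: divide_le_eq)
    qed
    have a0: "0 < \<alpha>" unfolding \<alpha>_def using sE by simp
    have b1: "\<beta> < 1" using b4 by simp
    have main: "\<forall>z. 1 / 2 * frechet_derivative V (at z) z \<ge> \<beta> * V z + \<gamma>\<^sup>2 * C_beta \<beta> * (norm z)\<^sup>2 - \<alpha>"
    proof
      fix z :: "real^'r"
      define q where "q = inner z z"
      define S1 where "S1 = (\<Sum>i\<in>UNIV. G1 (x $ i) s2 (inner (w i) z + bb i) * inner (w i) z)"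
      define S0 where "S0 = (\<Sum>i\<in>UNIV. (x $ i - softplus (inner (w i) z + bb i))\<^sup>2 / (2 * s2))"
      have fd: "frechet_derivative V (at z) z = q + S1"
      proof -
        have "frechet_derivative V (at z) z = dderiv V [z] z" by simp
        also have "\<dots> = q + S1" unfolding dV using d1 by (simp add: FF_def q_def S1_def)
        finally show ?thesis .
      qed
      have Vz: "V z = c0 + q / 2 + S0" unfolding Veq by (simp add: FF_def d0 q_def S0_def)
      have nq: "(norm z)\<^sup>2 = q" unfolding q_def by (simp add: power2_norm_eq_inner)
      have q0: "0 \<le> q" unfolding q_def by simp
      have per: "G1 (x $ i) s2 (inner (w i) z + bb i) * inner (w i) z / 2
          - \<beta> * ((x $ i - softplus (inner (w i) z + bb i))\<^sup>2 / (2 * s2)) \<ge> - ((E i)\<^sup>2 / s2)" for i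
      proof -
        define l where "l = inner (w i) z + bb i"
        have "G1 (x $ i) s2 l * inner (w i) z / 2 - \<beta> * ((x $ i - softplus l)\<^sup>2 / (2 * s2))
           = ((softplus l - x $ i) * sg l * (l - bb i) - \<beta> * (x $ i - softplus l)\<^sup>2) / (2 * s2)"
          using s2 unfolding l_def by (simp add: G1_def field_simps)
        also have "\<dots> \<ge> (- 2 * (E i)\<^sup>2) / (2 * s2)"
          using phi_bound[OF b0 b4, where t=l and xi="x $ i" and bi="bb i"] s2 unfolding E_def by (intro divide_right_mono) auto
        finally show ?thesis using s2 unfolding l_def by (simp add: field_simps)
      qed
      have sumf: "S1 / 2 - \<beta> * S0 \<ge> - (\<Sum>i\<in>UNIV. (E i)\<^sup>2 / s2)"
      proof -
        have "S1 / 2 - \<beta> * S0 = (\<Sum>i\<in>UNIV. G1 (x $ i) s2 (inner (w i) z + bb i) * inner (w i) z / 2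
          - \<beta> * ((x $ i - softplus (inner (w i) z + bb i))\<^sup>2 / (2 * s2)))"
          unfolding S1_def S0_def by (simp add: sum_subtractf sum_divide_distrib sum_distrib_left)
        also have "\<dots> \<ge> (\<Sum>i\<in>UNIV. - ((E i)\<^sup>2 / s2))" by (intro sum_mono per)
        finally show ?thesis by (simp add: sum_negf)
      qed
      have quad: "\<gamma>\<^sup>2 * C_beta \<beta> * q \<le> \<gamma>\<^sup>2 * (\<beta> / 2) * q"
        using Cb q0 by (intro mult_right_mono mult_left_mono) auto
      have quad2: "\<beta> * q / 2 + \<gamma>\<^sup>2 * (\<beta> / 2) * q = q / 8"
      proof -
        have "\<beta> * q / 2 + \<gamma>\<^sup>2 * (\<beta> / 2) * q = (\<beta> * (1 + \<gamma>\<^sup>2)) * q / 2" by (simp add: algebra_simps)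
        then show ?thesis using bg by simp
      qed
      have bc: "\<beta> * c0 \<le> \<bar>c0\<bar>"
      proof -
        have "\<beta> * c0 \<le> \<beta> * \<bar>c0\<bar>" using b0 by (intro mult_left_mono) auto
        also have "\<dots> \<le> 1 * \<bar>c0\<bar>" using b4 by (intro mult_right_mono) auto
        finally show ?thesis by simp
      qed
      have "\<beta> * V z + \<gamma>\<^sup>2 * C_beta \<beta> * (norm z)\<^sup>2 - \<alpha> = \<beta> * c0 + \<beta> * q / 2 + \<beta> * S0 + \<gamma>\<^sup>2 * C_beta \<beta> * q - \<alpha>"
        unfolding Vz nq by (simp add: algebra_simps)
      also have "\<dots> \<le> 1 / 2 * (q + S1)"
        unfolding \<alpha>_def by (rule lin_aux[OF sumf quad quad2 bc q0])
      finally show "1 / 2 * frechet_derivative V (at z) z \<ge> \<beta> * V z + \<gamma>\<^sup>2 * C_beta \<beta> * (norm z)\<^sup>2 - \<alpha>"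
        unfolding fd .
    qed
    show "assumption_A2 V \<gamma>" unfolding assumption_A2_def
      using a0 b0 b1 main by blast
  qed
  show ?thesis using P1 P2 P3 P4 by blast
qed


end
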